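(* Let $A\subset\mathbb A$ be an essential thin annular continuum such that $C_A$ is compactly generated and $H_{\mathcal S_A}<\infty$. Then $A$ is compactly generated.
   Context: $\mathbb A=\mathbb S^1\times\mathbb R$, $\pi:\mathbb R^2\to\mathbb A$, $T(x,y)=(x+1,y)$. An essential annular continuum $A$ is a continuum with $\mathbb A\setminus A$ exactly two components $\mathcal U^+(A),\mathcal U^-(A)$, unbounded above resp. below; thin means empty interior; $C_A=\overline{\mathcal U^+(A)}\cap\overline{\mathcal U^-(A)}$; $\hat A=\pi^{-1}(A)$, $C_{\hat A}=\pi^{-1}(C_A)$. A closed $B\subset\mathbb A$ is compactly generated if there is compact connected $G_0\subset\pi^{-1}(B)$ with $\bigcup_nT^n(G_0)=\pi^{-1}(B)$. For $X\subset\mathbb R^2$, $h(X)=\sup\{x_1-x_2:(x_1,y_1),(x_2,y_2)\in X\}$. $\mathcal S_A$ is the set of connected components (spikes) of $\hat A\setminus C_{\hat A}$ and $H_{\mathcal S_A}=\sup\{h(S):S\in\mathcal S_A\}$. *)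

theory Defs
  imports "HOL-Analysis.Analysis"
begin

definition annulus :: "(complex \<times> real) set" where
  "annulus = {p. norm (fst p) = 1}"

definition proj :: "real \<times> real \<Rightarrow> complex \<times> real" where
  "proj p = (cis (2 * pi * fst p), snd p)"

definition Tpow :: "int \<Rightarrow> real \<times> real \<Rightarrow> real \<times> real" where
  "Tpow n p = (fst p + of_int n, snd p)"

definition lift :: "(complex \<times> real) set \<Rightarrow> (real \<times> real) set" where
  "lift B = proj -` B"

definition essential_annular_continuum :: "(complex \<times> real) set \<Rightarrow> bool" where
  "essential_annular_continuum A \<longleftrightarrow>
     A \<subseteq> annulus \<and> compact A \<and> connected A \<and> A \<noteq> {} \<and>
     (\<exists>U V. components (annulus - A) = {U, V} \<and> U \<noteq> V \<and>
            \<not> bdd_above (snd ` U) \<and> \<not> bdd_below (snd ` V))"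

definition Uplus :: "(complex \<times> real) set \<Rightarrow> (complex \<times> real) set" where
  "Uplus A = (THE U. U \<in> components (annulus - A) \<and> \<not> bdd_above (snd ` U))"

definition Uminus :: "(complex \<times> real) set \<Rightarrow> (complex \<times> real) set" where
  "Uminus A = (THE U. U \<in> components (annulus - A) \<and> \<not> bdd_below (snd ` U))"

definition thin :: "(complex \<times> real) set \<Rightarrow> bool" where
  "thin A \<longleftrightarrow> \<not> (\<exists>W. openin (top_of_set annulus) W \<and> W \<noteq> {} \<and> W \<subseteq> A)"

definition C_of :: "(complex \<times> real) set \<Rightarrow> (complex \<times> real) set" where
  "C_of A = closure (Uplus A) \<inter> closure (Uminus A)"

definition compactly_generated :: "(complex \<times> real) set \<Rightarrow> bool" where
  "compactly_generated B \<longleftrightarrow> B \<subseteq> annulus \<and> closed B \<and>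
     (\<exists>G0. compact G0 \<and> connected G0 \<and> G0 \<subseteq> lift B \<and>
           (\<Union>n::int. Tpow n ` G0) = lift B)"

definition hwidth :: "(real \<times> real) set \<Rightarrow> ereal" where
  "hwidth X = (SUP p\<in>X. SUP q\<in>X. ereal (fst p - fst q))"

definition spikes :: "(complex \<times> real) set \<Rightarrow> (real \<times> real) set set" where
  "spikes A = components (lift A - lift (C_of A))"

definition H_spikes :: "(complex \<times> real) set \<Rightarrow> ereal" where
  "H_spikes A = (SUP S\<in>spikes A. hwidth S)"

end

theory Submission
  imports Defs
begin


lemma Tpow_eq: "Tpow n p = (of_int n, 0) + p"
  by (simp add: Tpow_def prod_eq_iff)

lemma Tpow_img: "Tpow n ` S = (+) (of_int n, 0) ` S"
  by (simp add: Tpow_eq)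

lemma Tpow_Tpow [simp]: "Tpow m (Tpow n p) = Tpow (m+n) p"
  by (simp add: Tpow_def)

lemma Tpow_0 [simp]: "Tpow 0 p = p"
  by (simp add: Tpow_def)

lemma proj_Tpow [simp]: "proj (Tpow n p) = proj p"
proof -
  have "cis (2*pi*fst p + 2 * pi * of_int n) = cis (2*pi*fst p) * cis (2 * pi * of_int n)"
    by (simp only: cis_mult)
  also have "\<dots> = cis (2*pi*fst p)" by simp
  finally show ?thesis by (simp add: proj_def Tpow_def distrib_left)
qed

lemma proj_eq: assumes "proj p = proj q" shows "\<exists>n. q = Tpow n p"
proof -
  have s: "snd q = snd p" using assms by (simp add: proj_def)
  have "cis (2 * pi * fst q) = cis (2 * pi * fst p)" using assms by (simp add: proj_def)
  then have "sin (2 * pi * fst q) = sin (2 * pi * fst p) \<and> cos (2 * pi * fst q) = cos (2 * pi * fst p)"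
    by (simp add: complex_eq_iff)
  then obtain n::int where "2 * pi * fst q = 2 * pi * fst p + 2 * pi * n"
    using sin_cos_eq_iff[of "2 * pi * fst q" "2 * pi * fst p"] by blast
  then have "2*pi*fst q = 2*pi*(fst p + n)" by (simp add: algebra_simps)
  then have "fst q = fst p + n" by simp
  then show ?thesis using s by (intro exI[of _ n]) (simp add: Tpow_def prod_eq_iff)
qed

lemma proj_surj: assumes "z \<in> annulus" shows "\<exists>p. proj p = z \<and> fst p \<in> {-1..1}"
proof -
  obtain w y where z: "z = (w, y)" by (cases z)
  have w: "norm w = 1" using assms z by (simp add: annulus_def)
  then have "w \<noteq> 0" by auto
  then have "cis (Arg w) = w" using w by (simp add: cis_Arg sgn_div_norm)
  moreover have a1: "-pi < Arg w" "Arg w \<le> pi" using Arg_bounded by auto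
  have x1: "2 * pi * (Arg w / (2 * pi)) = Arg w" by simp
  have "-1 \<le> Arg w / (2 * pi)" using a1 pi_gt_zero by (simp add: field_simps)
  moreover have "Arg w / (2 * pi) \<le> 1" using a1 pi_gt_zero by (simp add: field_simps)
  ultimately show ?thesis
    by (intro exI[of _ "(Arg w / (2*pi), y)"]) (simp add: proj_def z x1)
qed

lemma proj_annulus: "proj p \<in> annulus"
  by (simp add: proj_def annulus_def)

lemma continuous_proj: "continuous_on UNIV proj"
  unfolding proj_def by (intro continuous_intros)

lemma lift_Tpow [simp]: "Tpow n ` lift B = lift B"
proof
  show "Tpow n ` lift B \<subseteq> lift B" by (auto simp: lift_def)
  show "lift B \<subseteq> Tpow n ` lift B"
  proof
    fix p assume "p \<in> lift B"
    then have "Tpow (-n) p \<in> lift B" by (simp add: lift_def)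
    moreover have "p = Tpow n (Tpow (-n) p)" by simp
    ultimately show "p \<in> Tpow n ` lift B" by (rule rev_image_eqI)
  qed
qed

lemma closed_lift: "closed B \<Longrightarrow> closed (lift B)"
  unfolding lift_def by (rule closed_vimage[OF _ continuous_proj])






lemma annulus_eq: "annulus = sphere (0::complex) 1 \<times> UNIV"
  by (auto simp: annulus_def)

lemma closed_annulus: "closed annulus"
  by (simp add: annulus_eq closed_Times)

lemma connected_annulus: "connected annulus"
  unfolding annulus_eq by (intro connected_Times connected_sphere) auto

lemma locally_connected_annulus: "locally connected annulus"
  unfolding annulus_eq
  by (intro ANR_imp_locally_connected ANR_Times ANR_sphere ANR_UNIV)

lemma compact_snd_bound:
  fixes A :: "(complex \<times> real) set"
  assumes "compact A" obtains M where "\<And>a. a \<in> A \<Longrightarrow> \<bar>snd a\<bar> \<le> M"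
proof -
  have "compact (snd ` A)" using assms by (intro compact_continuous_image continuous_intros)
  then have "bounded (snd ` A)" by (rule compact_imp_bounded)
  then obtain M where "\<forall>x\<in>snd ` A. \<bar>x\<bar> \<le> M" by (auto simp: bounded_real)
  then show ?thesis using that by auto
qed

lemma ess_facts:
  assumes "essential_annular_continuum A"
  shows "Uplus A \<in> components (annulus - A)" "Uminus A \<in> components (annulus - A)"
        "Uplus A \<noteq> Uminus A" "annulus - A = Uplus A \<union> Uminus A"
proof -
  have A: "A \<subseteq> annulus" "compact A" and
    "\<exists>U V. components (annulus - A) = {U, V} \<and> U \<noteq> V \<and>
            \<not> bdd_above (snd ` U) \<and> \<not> bdd_below (snd ` V)"
    using assms unfolding essential_annular_continuum_def by auto
  then obtain U V where UV0: "components (annulus - A) = {U, V} \<and> U \<noteq> V \<and>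
            \<not> bdd_above (snd ` U) \<and> \<not> bdd_below (snd ` V)" by (elim exE) (rule that, assumption)
  note UV = UV0[THEN conjunct1] UV0[THEN conjunct2, THEN conjunct1]
    UV0[THEN conjunct2, THEN conjunct2, THEN conjunct1] UV0[THEN conjunct2, THEN conjunct2, THEN conjunct2]
  obtain M where M: "\<And>a. a \<in> A \<Longrightarrow> \<bar>snd a\<bar> \<le> M" using compact_snd_bound A(2) by blast
  have Uc: "U \<in> components (annulus - A)" and Vc: "V \<in> components (annulus - A)" using UV by auto
  have disj: "U \<inter> V = {}" using components_nonoverlap[OF Uc Vc] UV(2) by blast
  define Top where "Top = sphere (0::complex) 1 \<times> {M<..}"
  define Bot where "Bot = sphere (0::complex) 1 \<times> {..<-M}"
  have cT: "connected Top" unfolding Top_def by (intro connected_Times connected_sphere) auto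
  have cB: "connected Bot" unfolding Bot_def by (intro connected_Times connected_sphere) auto
  have TA: "Top \<subseteq> annulus - A" unfolding Top_def annulus_eq using M by force
  have BA: "Bot \<subseteq> annulus - A" unfolding Bot_def annulus_eq using M by force
  obtain u where u: "u \<in> U" "snd u > M" using UV(3) by (meson bdd_above.I2 linorder_not_less)
  obtain v where v: "v \<in> V" "snd v < -M" using UV(4) by (meson bdd_below.I2 linorder_not_less)
  have "u \<in> annulus" using u(1) Uc in_components_subset by blast
  then have "u \<in> Top" using u by (auto simp: Top_def annulus_eq)
  then have TU: "Top \<subseteq> U" using components_maximal[OF Uc cT TA] u by blast
  have "v \<in> annulus" using v(1) Vc in_components_subset by blast
  then have "v \<in> Bot" using v by (auto simp: Bot_def annulus_eq)
  then have BV: "Bot \<subseteq> V" using components_maximal[OF Vc cB BA] v by blast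
  have Vb: "bdd_above (snd ` V)"
  proof (rule bdd_aboveI2)
    fix x assume "x \<in> V"
    show "snd x \<le> M"
    proof (rule ccontr)
      assume "\<not> snd x \<le> M"
      moreover have "x \<in> annulus" using \<open>x \<in> V\<close> Vc in_components_subset by blast
      ultimately have "x \<in> Top" by (auto simp: Top_def annulus_eq)
      then show False using TU disj \<open>x \<in> V\<close> by blast
    qed
  qed
  have Ub: "bdd_below (snd ` U)"
  proof (rule bdd_belowI2)
    fix x assume "x \<in> U"
    show "-M \<le> snd x"
    proof (rule ccontr)
      assume "\<not> -M \<le> snd x"
      moreover have "x \<in> annulus" using \<open>x \<in> U\<close> Uc in_components_subset by blast
      ultimately have "x \<in> Bot" by (auto simp: Bot_def annulus_eq)
      then show False using BV disj \<open>x \<in> U\<close> by blast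
    qed
  qed
  have 1: "Uplus A = U" unfolding Uplus_def
    by (rule the_equality) (use UV Vb in auto)
  have 2: "Uminus A = V" unfolding Uminus_def
    by (rule the_equality) (use UV Ub in auto)
  show "Uplus A \<in> components (annulus - A)" "Uminus A \<in> components (annulus - A)"
        "Uplus A \<noteq> Uminus A" using 1 2 UV by auto
  show "annulus - A = Uplus A \<union> Uminus A"
    using Union_components[of "annulus - A"] UV 1 2 by auto
qed

lemma C_sub:
  assumes "essential_annular_continuum A" shows "C_of A \<subseteq> A"
proof
  fix p assume p: "p \<in> C_of A"
  have A: "A \<subseteq> annulus" "compact A" using assms unfolding essential_annular_continuum_def by auto
  note F = ess_facts[OF assms]
  let ?U = "Uplus A" and ?V = "Uminus A"
  have oa: "openin (top_of_set annulus) (annulus - A)"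
  proof -
    have "annulus - A = annulus \<inter> (- A)" by auto
    then show ?thesis using A(2) by (metis compact_imp_closed open_Compl openin_open_Int)
  qed
  have lc: "locally connected (annulus - A)"
    using locally_connected_annulus oa by (rule locally_open_subset)
  have oU: "openin (top_of_set annulus) ?U"
    using openin_trans[OF openin_components_locally_connected[OF lc F(1)] oa] .
  have oV: "openin (top_of_set annulus) ?V"
    using openin_trans[OF openin_components_locally_connected[OF lc F(2)] oa] .
  have dUV: "?U \<inter> ?V = {}" using components_nonoverlap[OF F(1) F(2)] F(3) by blast
  have sU: "?U \<subseteq> annulus" "?V \<subseteq> annulus" using F(4) by auto
  have pa: "p \<in> annulus"
    using p closure_minimal[OF sU(1) closed_annulus] by (auto simp: C_of_def)
  show "p \<in> A"
  proof (rule ccontr)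
    assume "p \<notin> A"
    then have "p \<in> ?U \<or> p \<in> ?V" using pa F(4) by auto
    then show False
    proof
      assume "p \<in> ?U"
      then obtain Oo where O: "open Oo" "?U = annulus \<inter> Oo" "p \<in> Oo" using oU by (auto simp: openin_open)
      have "p \<in> closure ?V" using p by (simp add: C_of_def)
      then obtain q where "q \<in> ?V" "q \<in> Oo" using O open_Int_closure_eq_empty[of Oo ?V] by blast
      then show False using O(2) sU dUV by blast
    next
      assume "p \<in> ?V"
      then obtain Oo where O: "open Oo" "?V = annulus \<inter> Oo" "p \<in> Oo" using oV by (auto simp: openin_open)
      have "p \<in> closure ?U" using p by (simp add: C_of_def)
      then obtain q where "q \<in> ?U" "q \<in> Oo" using O open_Int_closure_eq_empty[of Oo ?U] by blast
      then show False using O(2) sU dUV by blast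
    qed
  qed
qed

lemma C_nonempty:
  assumes "essential_annular_continuum A" "thin A" shows "C_of A \<noteq> {}"
proof
  assume C: "C_of A = {}"
  note F = ess_facts[OF assms(1)]
  let ?U = "Uplus A" and ?V = "Uminus A"
  define Ob where "Ob = annulus - (closure ?U \<union> closure ?V)"
  have "Ob = annulus \<inter> (- (closure ?U \<union> closure ?V))" by (auto simp: Ob_def)
  then have "openin (top_of_set annulus) Ob"
    by (metis closed_Un closed_closure open_Compl openin_open_Int)
  moreover have "Ob \<subseteq> A" using F(4) closure_subset[of ?U] closure_subset[of ?V] by (auto simp: Ob_def)
  ultimately have "Ob = {}" using assms(2) unfolding thin_def by blast
  then have cov: "annulus \<subseteq> closure ?U \<union> closure ?V" by (auto simp: Ob_def)
  have d: "closure ?U \<inter> closure ?V \<inter> annulus = {}" using C by (auto simp: C_of_def)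
  have "?U \<noteq> {}" "?V \<noteq> {}" using F(1,2) in_components_nonempty by auto
  moreover have "?U \<subseteq> annulus" "?V \<subseteq> annulus" using F(4) by auto
  ultimately have "closure ?U \<inter> annulus \<noteq> {}" "closure ?V \<inter> annulus \<noteq> {}"
    using closure_subset by blast+
  then show False using connected_closedD[OF connected_annulus d cov] by auto
qed




lemma components_cc_of:
  assumes "S \<in> components Y" shows "S \<in> connected_components_of (top_of_set Y)"
proof -
  obtain a where a: "a \<in> Y" "S = connected_component_set Y a"
    using assms by (auto simp: components_def)
  have eq: "connected_component_of (top_of_set Y) a b \<longleftrightarrow> connected_component Y a b" for b
    unfolding connected_component_of_def connected_component_def connectedin_subtopology
      connectedin_iff_connected by blast
  have "connected_component_of_set (top_of_set Y) a = connected_component_set Y a"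
    using eq by blast
  then show ?thesis using a by (auto simp: connected_components_of_def)
qed

lemma locally_compact_Y:
  fixes L K :: "(real \<times> real) set"
  assumes "closed L" "closed K"
  shows "locally_compact_space (top_of_set (L - K))"
proof -
  have "locally_compact_space (top_of_set L)"
    by (rule locally_compact_space_closed_subset[OF locally_compact_space_euclidean])
       (use assms(1) closed_closedin in blast)
  moreover have "openin (top_of_set L) (L - K)"
  proof -
    have "L - K = L \<inter> (- K)" by blast
    then show ?thesis using assms(2) by (metis open_Compl openin_open_Int)
  qed
  moreover have "Hausdorff_space (top_of_set L)"
    by (rule Hausdorff_space_subtopology) (rule Hausdorff_space_euclidean)
  ultimately have "locally_compact_space (subtopology (top_of_set L) (L - K))"
    using locally_compact_space_open_subset by blast
  moreover have "subtopology (top_of_set L) (L - K) = top_of_set (L - K)"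
    unfolding subtopology_subtopology by (metis Diff_subset Int_absorb1)
  ultimately show ?thesis by simp
qed




lemma bump:
  assumes A: "compact A" "connected A" "A \<subseteq> annulus" "C \<subseteq> A" "C \<noteq> {}" "closed C"
    and S: "S \<in> components (lift A - lift C)"
    and w: "\<And>p q. p \<in> S \<Longrightarrow> q \<in> S \<Longrightarrow> fst p - fst q \<le> H"
  shows "closure S \<inter> lift C \<noteq> {}"
proof
  assume dis: "closure S \<inter> lift C = {}"
  define L where "L = lift A"
  define LC where "LC = lift C"
  define Y where "Y = L - LC"
  have cL: "closed L" unfolding L_def by (simp add: closed_lift A compact_imp_closed)
  have cLC: "closed LC" unfolding LC_def by (simp add: closed_lift A)
  have LCL: "LC \<subseteq> L" using A(4) by (auto simp: L_def LC_def lift_def)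
  obtain M where M: "\<And>a. a \<in> A \<Longrightarrow> \<bar>snd a\<bar> \<le> M" using compact_snd_bound A(1) by blast
  have Mbnd: "\<bar>snd p\<bar> \<le> M" if "p \<in> L" for p
    using M[of "proj p"] that by (auto simp: L_def lift_def proj_def)
  have SY: "S \<subseteq> Y" using S in_components_subset by (auto simp: Y_def L_def LC_def)
  have Sne: "S \<noteq> {}" using S in_components_nonempty by blast
  have Scon: "connected S" using S in_components_connected by blast
  have "closure S \<subseteq> L" using SY by (intro closure_minimal cL) (auto simp: Y_def)
  then have clY: "closure S \<subseteq> Y" using dis by (auto simp: Y_def LC_def)
  have "closure S \<subseteq> S"
  proof (rule components_maximal[OF S connected_imp_connected_closure[OF Scon]])
    show "closure S \<subseteq> lift A - lift C" using clY by (simp add: Y_def L_def LC_def)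
    show "S \<inter> closure S \<noteq> {}" using Sne closure_subset by blast
  qed
  then have cS: "closed S" using closure_subset_eq by blast
  obtain s0 where s0: "s0 \<in> S" using Sne by blast
  have "S \<subseteq> {fst s0 - H..fst s0 + H} \<times> {-M..M}"
  proof
    fix p assume "p \<in> S"
    moreover have "p \<in> L" using \<open>p \<in> S\<close> SY by (auto simp: Y_def)
    ultimately have "fst p - fst s0 \<le> H" "fst s0 - fst p \<le> H" "\<bar>snd p\<bar> \<le> M"
      using w s0 Mbnd by auto
    then show "p \<in> {fst s0 - H..fst s0 + H} \<times> {-M..M}" by (cases p) auto
  qed
  then have kS: "compact S"
    using cS by (metis compact_Int_closed compact_Times compact_Icc inf.absorb_iff2)
  obtain U1 U2 where U: "open U1" "open U2" "S \<subseteq> U1" "LC \<subseteq> U2" "U1 \<inter> U2 = {}"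
    using separation_normal[OF compact_imp_closed[OF kS] cLC] dis closure_subset
    by (metis LC_def disjoint_iff subsetD)
  obtain R where R: "S \<subseteq> ball 0 R" using bounded_subset_ballD compact_imp_bounded[OF kS] by blast
  define W where "W = Y \<inter> (U1 \<inter> ball 0 R)"
  have oW: "openin (top_of_set Y) W" unfolding W_def using U by (intro openin_open_Int) auto
  have SW: "S \<subseteq> W" using SY U R by (auto simp: W_def)
  have lc: "locally_compact_space (top_of_set Y)" unfolding Y_def by (rule locally_compact_Y[OF cL cLC])
  have hs: "Hausdorff_space (top_of_set Y)" by (rule Hausdorff_space_subtopology) simp
  have ccS: "S \<in> connected_components_of (top_of_set Y)"
    using components_cc_of S by (simp add: Y_def L_def LC_def)
  have kSY: "compactin (top_of_set Y) S" using kS SY by (simp add: compactin_subtopology)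
  obtain Uo Vo where UV: "openin (top_of_set Y) Uo" "openin (top_of_set Y) Vo" "disjnt Uo Vo"
     "Uo \<union> Vo = Y" "S \<subseteq> Uo" "Uo \<subseteq> W"
    using wilder_locally_compact_component_thm[OF lc hs ccS kSY oW SW] by auto
  have UoY: "Uo \<subseteq> Y" using UV(6) by (auto simp: W_def)
  have "closedin (top_of_set Y) Uo"
  proof -
    have "Uo = Y - Vo" using UV(3,4) by (auto simp: disjnt_def)
    then show ?thesis using UV(2) by (simp add: closedin_diff)
  qed
  then obtain F where F: "closed F" "Uo = Y \<inter> F" by (auto simp: closedin_closed)
  have "closure Uo \<subseteq> closure U1" using UV(6) by (intro closure_mono) (auto simp: W_def)
  moreover have "U2 \<inter> closure U1 = {}" using U open_Int_closure_eq_empty by blast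
  ultimately have "closure Uo \<inter> LC = {}" using U(4) by blast
  moreover have "closure Uo \<subseteq> L" using UoY by (intro closure_minimal cL) (auto simp: Y_def)
  moreover have "closure Uo \<subseteq> F" using F closure_minimal by blast
  ultimately have "closure Uo \<subseteq> Uo" using F(2) by (auto simp: Y_def)
  then have cUo: "closed Uo" using closure_subset_eq by blast
  have "bounded Uo" using UV(6) by (auto simp: W_def intro: bounded_subset[OF bounded_ball])
  then have kUo: "compact Uo" using cUo by (simp add: compact_eq_bounded_closed)
  obtain Oo where O: "open Oo" "Uo = Y \<inter> Oo" using UV(1) by (auto simp: openin_open)
  define Op where "Op = Oo - LC"
  have oOp: "open Op" using O cLC by (simp add: Op_def open_Diff)
  have UoL: "Uo = L \<inter> Op" using O by (auto simp: Op_def Y_def)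
  define P where "P = proj ` Uo"
  have cP: "closed P" unfolding P_def
    by (intro compact_imp_closed compact_continuous_image continuous_on_subset[OF continuous_proj] kUo) auto
  define K where "K = (L - (\<Union>n. Tpow n ` Op)) \<inter> ({-1..1} \<times> {-M..M})"
  have oT: "open (\<Union>n. Tpow n ` Op)"
    using oOp by (auto simp: Tpow_img intro!: open_translation)
  have kK: "compact K" unfolding K_def
    by (intro closed_Int_compact closed_Diff cL oT compact_Times compact_Icc)
  have PA: "P \<subseteq> A" using UoY by (auto simp: P_def Y_def L_def lift_def)
  have QK: "A - P = proj ` K"
  proof
    show "proj ` K \<subseteq> A - P"
    proof
      fix a assume "a \<in> proj ` K"
      then obtain k where k: "k \<in> K" "a = proj k" by blast
      have "a \<in> A" using k by (auto simp: K_def L_def lift_def)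
      moreover have "a \<notin> P"
      proof
        assume "a \<in> P"
        then obtain u where u: "u \<in> Uo" "proj u = proj k" using k by (auto simp: P_def)
        then obtain n where "k = Tpow n u" using proj_eq by blast
        moreover have "u \<in> Op" using u UoL by auto
        ultimately show False using k by (auto simp: K_def)
      qed
      ultimately show "a \<in> A - P" by blast
    qed
    show "A - P \<subseteq> proj ` K"
    proof
      fix a assume a: "a \<in> A - P"
      then obtain p where p: "proj p = a" "fst p \<in> {-1..1}" using proj_surj A(3) by blast
      have pL: "p \<in> L" using p a by (auto simp: L_def lift_def)
      have "p \<notin> (\<Union>n. Tpow n ` Op)"
      proof
        assume "p \<in> (\<Union>n. Tpow n ` Op)"
        then obtain n q0 where o: "q0 \<in> Op" "p = Tpow n q0" by blast
        then have "q0 \<in> L" using pL by (auto simp: L_def lift_def)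
        then have "q0 \<in> Uo" using o UoL by auto
        then have "a \<in> P" using o p by (auto simp: P_def)
        then show False using a by blast
      qed
      moreover have "snd p \<in> {-M..M}" using Mbnd[OF pL] by auto
      ultimately have "p \<in> K" using pL p by (auto simp: K_def mem_Times_iff)
      then show "a \<in> proj ` K" using p by blast
    qed
  qed
  have cQ: "closed (A - P)" unfolding QK
    by (intro compact_imp_closed compact_continuous_image continuous_on_subset[OF continuous_proj] kK) auto
  have "P \<inter> A \<noteq> {}" using Sne UV(5) PA by (auto simp: P_def)
  moreover have "C \<subseteq> A - P"
  proof
    fix c assume c: "c \<in> C"
    have "c \<notin> P"
    proof
      assume "c \<in> P"
      then obtain u where "u \<in> Uo" "proj u = c" by (auto simp: P_def)
      then show False using UoY c by (auto simp: Y_def LC_def lift_def)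
    qed
    then show "c \<in> A - P" using c A(4) by auto
  qed
  then have "(A - P) \<inter> A \<noteq> {}" using A(5) by blast
  moreover have "P \<inter> (A - P) \<inter> A = {}" by blast
  moreover have "A \<subseteq> P \<union> (A - P)" by blast
  ultimately show False using connected_closedD[OF A(2) _ _ cP cQ] by blast
qed




lemma closed_fst_le: "closed {s::real\<times>real. fst s \<le> c}"
  by (rule closed_Collect_le) (auto intro!: continuous_intros)

lemma closed_fst_ge: "closed {s::real\<times>real. c \<le> fst s}"
  by (rule closed_Collect_le) (auto intro!: continuous_intros)

lemma lift_diff_Tpow [simp]: "Tpow m ` (lift A - lift B) = lift A - lift B"
proof
  show "Tpow m ` (lift A - lift B) \<subseteq> lift A - lift B" by (auto simp: lift_def)
  show "lift A - lift B \<subseteq> Tpow m ` (lift A - lift B)"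
  proof
    fix p assume "p \<in> lift A - lift B"
    then have "Tpow (-m) p \<in> lift A - lift B" by (simp add: lift_def)
    moreover have "p = Tpow m (Tpow (-m) p)" by simp
    ultimately show "p \<in> Tpow m ` (lift A - lift B)" by (rule rev_image_eqI)
  qed
qed

lemma Tpow_Tpow_img [simp]: "Tpow m ` Tpow n ` X = Tpow (m+n) ` X"
  by (simp add: image_image)

lemma Tpow_0_img [simp]: "Tpow 0 ` X = X"
  by simp

lemma connected_Tpow: "connected S \<Longrightarrow> connected (Tpow n ` S)"
  unfolding Tpow_img by (intro connected_continuous_image continuous_intros)

lemma closure_Tpow: "closure (Tpow n ` S) = Tpow n ` closure S"
  unfolding Tpow_img by (rule closure_translation)

lemma comp_Tpow:
  assumes "S \<in> components Y" "\<And>m. Tpow m ` Y = Y"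
  shows "Tpow n ` S \<in> components Y"
proof -
  have S: "S \<noteq> {}" "S \<subseteq> Y" "connected S"
    "\<And>D. D \<noteq> {} \<Longrightarrow> S \<subseteq> D \<Longrightarrow> D \<subseteq> Y \<Longrightarrow> connected D \<Longrightarrow> D = S"
    using assms(1) unfolding in_components_maximal by auto
  show ?thesis unfolding in_components_maximal
  proof (intro conjI allI impI)
    show "Tpow n ` S \<noteq> {}" using S by auto
    show "Tpow n ` S \<subseteq> Y" using S(2) assms(2)[of n] by blast
    show "connected (Tpow n ` S)" using S(3) by (rule connected_Tpow)
    fix D assume D: "D \<noteq> {} \<and> Tpow n ` S \<subseteq> D \<and> D \<subseteq> Y \<and> connected D"
    have "Tpow (-n) ` D = S"
    proof (rule S(4))
      show "Tpow (-n) ` D \<noteq> {}" using D by auto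
      have "Tpow (-n) ` Tpow n ` S \<subseteq> Tpow (-n) ` D" using D by (intro image_mono) auto
      then show "S \<subseteq> Tpow (-n) ` D" by simp
      show "Tpow (-n) ` D \<subseteq> Y" using D assms(2)[of "-n"] by blast
      show "connected (Tpow (-n) ` D)" using D connected_Tpow by blast
    qed
    then have "Tpow n ` Tpow (-n) ` D = Tpow n ` S" by simp
    then show "D = Tpow n ` S" by simp
  qed
qed

theorem mainTheorem16:
  assumes "essential_annular_continuum A"
    and "thin A"
    and "compactly_generated (C_of A)"
    and "H_spikes A < \<infinity>"
  shows "compactly_generated A"
proof -
  have A: "A \<subseteq> annulus" "compact A" "connected A"
    using assms(1) unfolding essential_annular_continuum_def by auto
  define C where "C = C_of A"
  have CA: "C \<subseteq> A" using C_sub[OF assms(1)] by (simp add: C_def)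
  have Cne: "C \<noteq> {}" using C_nonempty[OF assms(1,2)] by (simp add: C_def)
  have cC: "closed C" by (simp add: C_def C_of_def closed_Int)
  define L where "L = lift A"
  define LC where "LC = lift C"
  define Y where "Y = L - LC"
  have cL: "closed L" unfolding L_def by (simp add: closed_lift A compact_imp_closed)
  have LCL: "LC \<subseteq> L" using CA by (auto simp: L_def LC_def lift_def)
  obtain M where M: "\<And>a. a \<in> A \<Longrightarrow> \<bar>snd a\<bar> \<le> M" using compact_snd_bound A(2) by blast
  have Mbnd: "\<bar>snd p\<bar> \<le> M" if "p \<in> L" for p
    using M[of "proj p"] that by (auto simp: L_def lift_def proj_def)
  obtain H where H: "H_spikes A \<le> ereal H"
    using assms(4) by (cases "H_spikes A") auto
  have w: "fst p - fst q \<le> H" if "S \<in> components Y" "p \<in> S" "q \<in> S" for S p q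
  proof -
    have "ereal (fst p - fst q) \<le> hwidth S"
      unfolding hwidth_def using that(2,3)
      by (meson SUP_upper2 order_refl)
    also have "\<dots> \<le> H_spikes A" unfolding H_spikes_def
      using that(1) by (intro SUP_upper) (simp add: spikes_def Y_def L_def LC_def C_def)
    finally have "ereal (fst p - fst q) \<le> ereal H" using H by (rule order_trans)
    then show ?thesis by simp
  qed
  obtain G where G: "compact G" "connected G" "G \<subseteq> LC" "(\<Union>n::int. Tpow n ` G) = LC"
    using assms(3) unfolding compactly_generated_def by (auto simp: LC_def C_def)
  have "LC \<noteq> {}"
  proof -
    obtain c where "c \<in> C" using Cne by blast
    then obtain p where "proj p = c" using proj_surj CA A(1) by blast
    then show ?thesis using \<open>c \<in> C\<close> by (auto simp: LC_def lift_def)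
  qed
  then have Gne: "G \<noteq> {}" using G(4) by auto
  obtain B where B: "\<And>g. g \<in> G \<Longrightarrow> \<bar>fst g\<bar> \<le> B"
  proof -
    have "compact (fst ` G)" using G(1) by (intro compact_continuous_image continuous_intros)
    then have "bounded (fst ` G)" by (rule compact_imp_bounded)
    then obtain B where "\<forall>x\<in>fst ` G. \<bar>x\<bar> \<le> B" by (auto simp: bounded_real)
    then show ?thesis using that by auto
  qed
  define Fam where "Fam = {closure S | S. S \<in> components Y \<and> closure S \<inter> G \<noteq> {}}"
  define G0 where "G0 = closure (G \<union> \<Union>Fam)"
  define Box where "Box = {-B-\<bar>H\<bar>..B+\<bar>H\<bar>} \<times> {-M..M}"
  have cBox: "compact Box" unfolding Box_def by (intro compact_Times compact_Icc)
  have FamL: "X \<subseteq> L" if X: "X \<in> Fam" for X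
  proof -
    obtain S where S: "X = closure S" "S \<in> components Y" using X by (auto simp: Fam_def)
    have "S \<subseteq> Y" using S(2) in_components_subset by blast
    then have "S \<subseteq> L" by (auto simp: Y_def)
    then show ?thesis using S(1) by (simp add: closure_minimal cL)
  qed
  have FamBox: "X \<subseteq> Box" if X: "X \<in> Fam" for X
  proof -
    obtain S q where S: "X = closure S" "S \<in> components Y" "q \<in> closure S" "q \<in> G"
      using X by (auto simp: Fam_def)
    have "S \<subseteq> Box"
    proof
      fix p assume p: "p \<in> S"
      have "S \<subseteq> {s. fst s \<le> fst p + H}" using w[OF S(2) _ p] by force
      then have "closure S \<subseteq> {s. fst s \<le> fst p + H}"
        by (intro closure_minimal closed_fst_le)
      then have 1: "fst q \<le> fst p + H" using S(3) by auto
      have "S \<subseteq> {s. fst p - H \<le> fst s}" using w[OF S(2) p] by force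
      then have "closure S \<subseteq> {s. fst p - H \<le> fst s}"
        by (intro closure_minimal closed_fst_ge)
      then have 2: "fst p - H \<le> fst q" using S(3) by auto
      have "p \<in> L" using p S(2) in_components_subset by (fastforce simp: Y_def)
      then show "p \<in> Box" using 1 2 B[OF S(4)] Mbnd[of p] by (cases p) (auto simp: Box_def abs_le_iff)
    qed
    then show ?thesis using S(1) closure_minimal compact_imp_closed[OF cBox] by blast
  qed
  have GBox: "G \<subseteq> Box"
  proof
    fix g assume g: "g \<in> G"
    then have "g \<in> L" using G(3) LCL by blast
    then show "g \<in> Box" using Mbnd[of g] B[OF g] by (cases g) (auto simp: Box_def)
  qed
  have GL: "G \<subseteq> L" using G(3) LCL by blast
  have sub: "G \<union> \<Union>Fam \<subseteq> L \<inter> Box" using GL GBox FamL FamBox by blast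
  have G0L: "G0 \<subseteq> L" unfolding G0_def using sub cL closure_minimal by blast
  have G0B: "G0 \<subseteq> Box" unfolding G0_def
    using sub compact_imp_closed[OF cBox] closure_minimal by blast
  have kG0: "compact G0"
    using G0B compact_imp_bounded[OF cBox] bounded_subset
    by (auto simp: compact_eq_bounded_closed G0_def)
  have cG0: "connected G0"
  proof -
    define F' where "F' = insert G ((\<union>) G ` Fam)"
    have "connected (\<Union>F')"
    proof (rule connected_Union)
      fix X assume "X \<in> F'"
      then consider "X = G" | Z where "Z \<in> Fam" "X = G \<union> Z" by (auto simp: F'_def)
      then show "connected X"
      proof cases
        case 1 then show ?thesis using G(2) by simp
      next
        case 2
        then obtain S where S: "Z = closure S" "S \<in> components Y" "closure S \<inter> G \<noteq> {}"
          by (auto simp: Fam_def)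
        have "connected Z" using S in_components_connected connected_imp_connected_closure by blast
        then show ?thesis using 2 S G(2) connected_Un by (metis inf_commute)
      qed
    next
      show "\<Inter>F' \<noteq> {}" using Gne by (auto simp: F'_def)
    qed
    moreover have "\<Union>F' = G \<union> \<Union>Fam" by (auto simp: F'_def)
    ultimately show ?thesis unfolding G0_def using connected_imp_connected_closure by metis
  qed
  have YT: "\<And>m. Tpow m ` Y = Y" by (simp add: Y_def L_def LC_def)
  have cover: "(\<Union>n::int. Tpow n ` G0) = L"
  proof
    show "(\<Union>n::int. Tpow n ` G0) \<subseteq> L"
      using G0L by (auto simp: L_def lift_def)
    show "L \<subseteq> (\<Union>n::int. Tpow n ` G0)"
    proof
      fix p assume pL: "p \<in> L"
      show "p \<in> (\<Union>n::int. Tpow n ` G0)"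
      proof (cases "p \<in> LC")
        case True
        then obtain n g where "g \<in> G" "p = Tpow n g" using G(4) by blast
        moreover have "g \<in> G0" using \<open>g \<in> G\<close> closure_subset by (auto simp: G0_def)
        ultimately show ?thesis by blast
      next
        case False
        then have pY: "p \<in> Y" using pL by (simp add: Y_def)
        define S where "S = connected_component_set Y p"
        have S: "S \<in> components Y" unfolding components_iff S_def using pY by blast
        have pS: "p \<in> S" using pY by (simp add: S_def)
        have "closure S \<inter> lift C \<noteq> {}"
          by (rule bump[OF A(2) A(3) A(1) CA Cne cC]) (use S w in \<open>auto simp: Y_def L_def LC_def\<close>)
        then obtain q where q: "q \<in> closure S" "q \<in> LC" by (auto simp: LC_def)
        then obtain n g where g: "g \<in> G" "q = Tpow n g" using G(4) by blast
        define S' where "S' = Tpow (-n) ` S"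
        have S': "S' \<in> components Y" unfolding S'_def by (rule comp_Tpow[OF S YT])
        have "g = Tpow (-n) q" using g by simp
        then have "g \<in> Tpow (-n) ` closure S" using q(1) by blast
        then have "g \<in> closure S'" by (simp add: S'_def closure_Tpow)
        then have "closure S' \<in> Fam" using S' g by (auto simp: Fam_def)
        then have "closure S' \<subseteq> G \<union> \<Union>Fam" by blast
        then have "closure S' \<subseteq> G0" unfolding G0_def
          using closure_subset[of "G \<union> \<Union>Fam"] by blast
        moreover have "Tpow (-n) p \<in> closure S'"
          using pS closure_subset[of S'] unfolding S'_def by blast
        ultimately have "Tpow (-n) p \<in> G0" by blast
        moreover have "p = Tpow n (Tpow (-n) p)" by simp
        ultimately show ?thesis by blast
      qed
    qed
  qed
  show ?thesis unfolding compactly_generated_def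
    using A(1) compact_imp_closed[OF A(2)] kG0 cG0 G0L cover by (auto simp: L_def)
qed


end
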